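(* Let $\ell,n,d_0\in\mathbb{N}$ and $d=d_0+2\ell$. Let $X\in\{-1,1\}^{n\times d_0}$, let $\mathbf{P}$ be a uniformly random $d\times d$ permutation matrix, and let $\mathbf{Y}=\mathsf{PAP}_{n,d_0,\ell}(X,\mathbf{P})$. Let $\mathsf{M}\colon\{-1,1\}^{n\times d}\to[-1,1]^d$ be a mechanism such that for every $Y$ in the support of $\mathbf{Y}$, $\mathsf{M}(Y)$ strongly-agrees with $Y$ (with probability 1). Then the random vector $(\mathsf{M}(\mathbf{Y})\cdot\mathbf{P}^T)^{1,\dots,d_0}$ (the first $d_0$ coordinates of the row vector $\mathsf{M}(\mathbf{Y})\mathbf{P}^T$) is strongly-correlated with $X$.
   Context: $\mathsf{PAP}_{n,d_0,\ell}(X,P)=X''\cdot P$, where $X''\in\{-1,1\}^{n\times d}$ is obtained from $X$ by appending $\ell$ columns with all entries $1$ and $\ell$ columns with all entries $-1$ (after the $d_0$ original columns), and $P$ is a $d\times d$ permutation matrix (permuting columns). For a matrix $Z$ and $b\in\{-1,1\}$, $\mathcal{J}_Z^b$ is the set of columns all of whose entries equal $b$. A vector $q$ strongly-agrees with $Z$ if for both $b$, $|\{j\in\mathcal{J}_Z^b:q^j=b\}|\ge0.9|\mathcal{J}_Z^b|$. A random vector $Q\in[-1,1]^{d_0}$ is strongly-correlated with $X$ if for all $b\in\{-1,1\}$ and $j\in\mathcal{J}_X^b$, $\Pr[Q^j=b]\ge0.9$ (probability over $\mathbf{P}$ and $\mathsf{M}$'s coins). *)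

theory Defs
  imports "HOL-Probability.Probability" "HOL-Combinatorics.Permutations"
begin

text \<open>Matrices are functions nat => nat => real (row index, column index), vectors are
  functions nat => real; only entries with in-range indices are meaningful and we set
  all out-of-range entries to 0 in constructed objects.\<close>

definition pad_cols :: "nat \<Rightarrow> nat \<Rightarrow> nat \<Rightarrow> (nat \<Rightarrow> nat \<Rightarrow> real) \<Rightarrow> (nat \<Rightarrow> nat \<Rightarrow> real)" where
  "pad_cols n d0 l X = (\<lambda>i j. if i < n \<and> j < d0 + 2 * l then
      (if j < d0 then X i j else if j < d0 + l then 1 else -1) else 0)"

definition perm_mat :: "nat \<Rightarrow> (nat \<Rightarrow> nat) \<Rightarrow> (nat \<Rightarrow> nat \<Rightarrow> real)" where
  "perm_mat d s = (\<lambda>j k. if j < d \<and> k < d \<and> j = s k then 1 else 0)"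

definition perm_mats :: "nat \<Rightarrow> (nat \<Rightarrow> nat \<Rightarrow> real) set" where
  "perm_mats d = perm_mat d ` {s. s permutes {..<d}}"

definition mat_mult :: "nat \<Rightarrow> nat \<Rightarrow> nat \<Rightarrow> (nat \<Rightarrow> nat \<Rightarrow> real) \<Rightarrow> (nat \<Rightarrow> nat \<Rightarrow> real) \<Rightarrow> (nat \<Rightarrow> nat \<Rightarrow> real)" where
  "mat_mult n m p A B = (\<lambda>i k. if i < n \<and> k < p then (\<Sum>j<m. A i j * B j k) else 0)"

definition vec_mat :: "nat \<Rightarrow> nat \<Rightarrow> (nat \<Rightarrow> real) \<Rightarrow> (nat \<Rightarrow> nat \<Rightarrow> real) \<Rightarrow> (nat \<Rightarrow> real)" where
  "vec_mat m p q B = (\<lambda>k. if k < p then (\<Sum>j<m. q j * B j k) else 0)"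

definition transp_mat :: "(nat \<Rightarrow> nat \<Rightarrow> real) \<Rightarrow> (nat \<Rightarrow> nat \<Rightarrow> real)" where
  "transp_mat A = (\<lambda>i j. A j i)"

definition PAP :: "nat \<Rightarrow> nat \<Rightarrow> nat \<Rightarrow> (nat \<Rightarrow> nat \<Rightarrow> real) \<Rightarrow> (nat \<Rightarrow> nat \<Rightarrow> real) \<Rightarrow> (nat \<Rightarrow> nat \<Rightarrow> real)" where
  "PAP n d0 l X P = mat_mult n (d0 + 2 * l) (d0 + 2 * l) (pad_cols n d0 l X) P"

definition constcols :: "nat \<Rightarrow> nat \<Rightarrow> (nat \<Rightarrow> nat \<Rightarrow> real) \<Rightarrow> real \<Rightarrow> nat set" where
  "constcols n m Z b = {j. j < m \<and> (\<forall>i<n. Z i j = b)}"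

definition strongly_agrees :: "nat \<Rightarrow> nat \<Rightarrow> (nat \<Rightarrow> real) \<Rightarrow> (nat \<Rightarrow> nat \<Rightarrow> real) \<Rightarrow> bool" where
  "strongly_agrees n m q Z = (\<forall>b \<in> {-1, 1::real}.
     real (card {j \<in> constcols n m Z b. q j = b}) \<ge> 0.9 * real (card (constcols n m Z b)))"

definition strongly_correlated :: "nat \<Rightarrow> nat \<Rightarrow> (nat \<Rightarrow> real) pmf \<Rightarrow> (nat \<Rightarrow> nat \<Rightarrow> real) \<Rightarrow> bool" where
  "strongly_correlated n d0 Q X = (\<forall>b \<in> {-1, 1::real}. \<forall>j \<in> constcols n d0 X b.
     measure_pmf.prob Q {q. q j = b} \<ge> 0.9)"

end

theory Submission imports Defs begin
lemma prob_bind_pmf_of_set: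
  assumes "finite S" "S \<noteq> {}"
  shows "measure_pmf.prob (pmf_of_set S \<bind> f) A = (\<Sum>x\<in>S. measure_pmf.prob (f x) A) / real (card S)"
proof -
  have "emeasure (measure_pmf (pmf_of_set S \<bind> f)) A = (\<Sum>x\<in>S. emeasure (measure_pmf (f x)) A) / card S"
    using assms by (simp add: nn_integral_pmf_of_set)
  also have "\<dots> = ennreal ((\<Sum>x\<in>S. measure_pmf.prob (f x) A) / real (card S))"
    using assms by (simp add: measure_pmf.emeasure_eq_measure sum_nonneg divide_ennreal card_gt_0_iff ennreal_of_nat_eq_real_of_nat)
  finally show ?thesis
    by (simp add: measure_pmf.emeasure_eq_measure sum_nonneg divide_nonneg_nonneg)
qed

lemma pmf_sum_prob_ge:
  assumes "finite J" "\<And>q. q \<in> set_pmf p \<Longrightarrow> c \<le> real (card {j\<in>J. P j q})"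
  shows "c \<le> (\<Sum>j\<in>J. measure_pmf.prob p {q. P j q})"
proof -
  have "(\<Sum>j\<in>J. measure_pmf.prob p {q. P j q}) = (\<Sum>j\<in>J. measure_pmf.expectation p (indicator {q. P j q}))"
    by simp
  also have "\<dots> = measure_pmf.expectation p (\<lambda>q. \<Sum>j\<in>J. indicator {q. P j q} q)"
    by (rule Bochner_Integration.integral_sum[symmetric]) (auto intro!: measure_pmf.integrable_const_bound[where B=1])
  also have "\<dots> = measure_pmf.expectation p (\<lambda>q. real (card {j\<in>J. P j q}))"
    using assms(1) by (simp add: indicator_def sum.If_cases Int_def)
  finally have eq: "(\<Sum>j\<in>J. measure_pmf.prob p {q. P j q}) = measure_pmf.expectation p (\<lambda>q. real (card {j\<in>J. P j q}))" .
  have "c \<le> measure_pmf.expectation p (\<lambda>q. real (card {j\<in>J. P j q}))"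
    apply (rule measure_pmf.integral_ge_const)
    using assms by (auto simp: AE_measure_pmf_iff intro!: measure_pmf.integrable_const_bound[where B="card J"] card_mono)
  then show ?thesis using eq by simp
qed

lemma PAP_perm:
  assumes s: "s permutes {..<d}" and d: "d = d0 + 2 * l"
  shows "PAP n d0 l X (perm_mat d s) = (\<lambda>i k. if i < n \<and> k < d then pad_cols n d0 l X i (s k) else 0)"
proof (intro ext)
  fix i k
  show "PAP n d0 l X (perm_mat d s) i k = (if i < n \<and> k < d then pad_cols n d0 l X i (s k) else 0)"
  proof (cases "i < n \<and> k < d")
    case True
    then have sk: "s k < d" using permutes_in_image[OF s] by auto
    have "(\<Sum>j<d. pad_cols n d0 l X i j * perm_mat d s j k) = (\<Sum>j<d. if j = s k then pad_cols n d0 l X i j else 0)"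
      using True by (intro sum.cong) (auto simp: perm_mat_def)
    also have "\<dots> = pad_cols n d0 l X i (s k)" using sk by (simp add: sum.delta)
    finally show ?thesis using True d by (simp add: PAP_def mat_mult_def)
  next
    case False
    then show ?thesis using d by (auto simp: PAP_def mat_mult_def)
  qed
qed

lemma vec_perm:
  assumes s: "s permutes {..<d}" and j: "j < d"
  shows "vec_mat d d q (transp_mat (perm_mat d s)) j = q (inv s j)"
proof -
  have ij: "inv s j < d" using permutes_in_image[OF permutes_inv[OF s]] j by auto
  have "(\<Sum>k<d. q k * transp_mat (perm_mat d s) k j) = (\<Sum>k<d. if k = inv s j then q k else 0)"
    using j by (intro sum.cong) (auto simp: transp_mat_def perm_mat_def permutes_inverses[OF s])
  also have "\<dots> = q (inv s j)" using ij by (simp add: sum.delta)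
  finally show ?thesis using j by (simp add: vec_mat_def)
qed

lemma inj_perm_mat: "inj_on (perm_mat d) {s. s permutes {..<d}}"
proof (rule inj_onI)
  fix s t assume s: "s \<in> {s. s permutes {..<d}}" and t: "t \<in> {s. s permutes {..<d}}"
    and eq: "perm_mat d s = perm_mat d t"
  show "s = t"
  proof
    fix k
    show "s k = t k"
    proof (cases "k < d")
      case True
      then have "s k < d" using permutes_in_image[of s "{..<d}"] s by auto
      then have "perm_mat d s (s k) k = 1" using True by (simp add: perm_mat_def)
      then have "perm_mat d t (s k) k = 1" using eq by simp
      then show ?thesis by (simp add: perm_mat_def split: if_splits)
    next
      case False
      then show ?thesis using s t by (simp add: permutes_def)
    qed
  qed
qed

theorem lemma6p2:
  fixes l n d0 d :: nat
    and X :: "nat \<Rightarrow> nat \<Rightarrow> real"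
    and M :: "(nat \<Rightarrow> nat \<Rightarrow> real) \<Rightarrow> (nat \<Rightarrow> real) pmf"
  assumes d_def: "d = d0 + 2 * l"
    and X_pm1: "\<forall>i<n. \<forall>j<d0. X i j \<in> {-1, 1}"
    and M_range: "\<forall>Y. \<forall>q \<in> set_pmf (M Y). \<forall>k<d. q k \<in> {-1..1}"
    and M_agree: "\<forall>P \<in> perm_mats d. \<forall>q \<in> set_pmf (M (PAP n d0 l X P)).
                     strongly_agrees n d q (PAP n d0 l X P)"
  shows "strongly_correlated n d0
           (do { P \<leftarrow> pmf_of_set (perm_mats d);
                 q \<leftarrow> M (PAP n d0 l X P);
                 return_pmf (\<lambda>j. if j < d0 then vec_mat d d q (transp_mat P) j else 0) }) X"
  unfolding strongly_correlated_def
proof (intro ballI)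
  fix b :: real and j
  assume b: "b \<in> {-1, 1}" and jX: "j \<in> constcols n d0 X b"
  define S where "S = {s. s permutes {..<d}}"
  define X2 where "X2 = pad_cols n d0 l X"
  define Ys where "Ys = (\<lambda>s. PAP n d0 l X (perm_mat d s))"
  define J where "J = constcols n d X2 b"
  define F where "F = (\<lambda>s j'. measure_pmf.prob (M (Ys s)) {q. q (inv s j') = b})"
  have Sfin: "finite S" unfolding S_def by (rule finite_permutations) simp
  have Sne: "S \<noteq> {}" unfolding S_def using permutes_id by blast
  have jd0: "j < d0" using jX by (simp add: constcols_def)
  have jd: "j < d" using jd0 d_def by simp
  have Jfin: "finite J" unfolding J_def constcols_def by simp
  have jJ: "j \<in> J" using jX jd unfolding J_def constcols_def X2_def pad_cols_def by auto
  have Jd: "J \<subseteq> {..<d}" unfolding J_def constcols_def by auto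
  have Ys_eq: "Ys s = (\<lambda>i k. if i < n \<and> k < d then X2 i (s k) else 0)" if "s \<in> S" for s
    using PAP_perm[of s d d0 l n X] that d_def unfolding Ys_def X2_def S_def by simp
  have pm: "pmf_of_set (perm_mats d) = map_pmf (perm_mat d) (pmf_of_set S)"
    unfolding perm_mats_def S_def
    by (rule map_pmf_of_set_inj[symmetric]) (use inj_perm_mat Sfin Sne in \<open>auto simp: S_def\<close>)
  have prob_eq: "measure_pmf.prob
           (do { P \<leftarrow> pmf_of_set (perm_mats d);
                 q \<leftarrow> M (PAP n d0 l X P);
                 return_pmf (\<lambda>j. if j < d0 then vec_mat d d q (transp_mat P) j else 0) }) {q. q j = b}
        = (\<Sum>s\<in>S. F s j) / real (card S)"
  proof -
    have "measure_pmf.prob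
           (do { P \<leftarrow> pmf_of_set (perm_mats d);
                 q \<leftarrow> M (PAP n d0 l X P);
                 return_pmf (\<lambda>j. if j < d0 then vec_mat d d q (transp_mat P) j else 0) }) {q. q j = b}
       = measure_pmf.prob (pmf_of_set S \<bind> (\<lambda>s. map_pmf (\<lambda>q. (\<lambda>j. if j < d0 then vec_mat d d q (transp_mat (perm_mat d s)) j else 0)) (M (Ys s)))) {q. q j = b}"
      unfolding pm bind_map_pmf by (simp add: Ys_def map_pmf_def)
    also have "\<dots> = (\<Sum>s\<in>S. measure_pmf.prob (map_pmf (\<lambda>q. (\<lambda>j. if j < d0 then vec_mat d d q (transp_mat (perm_mat d s)) j else 0)) (M (Ys s))) {q. q j = b}) / real (card S)"
      by (rule prob_bind_pmf_of_set[OF Sfin Sne])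
    also have "\<dots> = (\<Sum>s\<in>S. F s j) / real (card S)"
    proof -
      have "measure_pmf.prob (map_pmf (\<lambda>q. (\<lambda>j. if j < d0 then vec_mat d d q (transp_mat (perm_mat d s)) j else 0)) (M (Ys s))) {q. q j = b} = F s j"
        if "s \<in> S" for s
        using vec_perm[of s d j] that jd jd0 unfolding F_def S_def by (simp add: vimage_def)
      then show ?thesis by simp
    qed
    finally show ?thesis .
  qed
  have swap: "(\<Sum>s\<in>S. F s j) = (\<Sum>s\<in>S. F s j')" if j'J: "j' \<in> J" for j'
  proof -
    define \<tau> where "\<tau> = Transposition.transpose j j'"
    have tperm: "\<tau> permutes {..<d}" unfolding \<tau>_def using jJ j'J Jd by (intro permutes_swap_id) auto
    have tt: "\<tau> \<circ> (\<tau> \<circ> s) = s" for s :: "nat \<Rightarrow> nat" unfolding \<tau>_def by (simp add: comp_assoc[symmetric])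
    have bij: "bij_betw (\<lambda>s. \<tau> \<circ> s) S S"
      by (rule bij_betw_byWitness[where f'="\<lambda>s. \<tau> \<circ> s"])
         (use tt tperm in \<open>auto simp: S_def intro: permutes_compose\<close>)
    have Feq: "F (\<tau> \<circ> s) j = F s j'" if sS: "s \<in> S" for s
    proof -
      have s: "s permutes {..<d}" using sS by (simp add: S_def)
      have ts: "\<tau> \<circ> s \<in> S" using s tperm by (simp add: S_def permutes_compose)
      have "Ys (\<tau> \<circ> s) = Ys s"
      proof -
        have "X2 i (\<tau> (s k)) = X2 i (s k)" if "i < n" for i k
          using jJ j'J that unfolding \<tau>_def J_def constcols_def Transposition.transpose_def by auto
        then show ?thesis using Ys_eq[OF sS] Ys_eq[OF ts] by (auto intro!: ext)
      qed
      moreover have "inv (\<tau> \<circ> s) j = inv s j'"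
        using permutes_compose[OF s tperm]
        by (simp add: permutes_inv_eq permutes_inverses[OF s] \<tau>_def)
      ultimately show ?thesis unfolding F_def by simp
    qed
    have "(\<Sum>s\<in>S. F s j') = (\<Sum>s\<in>S. F (\<tau> \<circ> s) j)"
      using Feq by simp
    also have "\<dots> = (\<Sum>s\<in>S. F s j)"
      by (rule sum.reindex_bij_betw[OF bij, where g="\<lambda>s. F s j"])
    finally show ?thesis by simp
  qed
  have per: "0.9 * real (card J) \<le> (\<Sum>j'\<in>J. F s j')" if sS: "s \<in> S" for s
    unfolding F_def
  proof (rule pmf_sum_prob_ge[OF Jfin])
    fix q assume q: "q \<in> set_pmf (M (Ys s))"
    have s: "s permutes {..<d}" using sS by (simp add: S_def)
    have "perm_mat d s \<in> perm_mats d" using s by (simp add: perm_mats_def)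
    then have ag: "strongly_agrees n d q (Ys s)" using M_agree q unfolding Ys_def by blast
    define C where "C = constcols n d (Ys s) b"
    have C_eq: "C = inv s ` J"
    proof (intro equalityI subsetI)
      fix k assume "k \<in> C"
      then have k: "k < d" "\<forall>i<n. X2 i (s k) = b" unfolding C_def constcols_def using Ys_eq[OF sS] by auto
      have "s k < d" using k permutes_in_image[OF s] by auto
      then have "s k \<in> J" using k unfolding J_def constcols_def by auto
      then show "k \<in> inv s ` J" using permutes_inverses[OF s] by (metis image_eqI)
    next
      fix k assume "k \<in> inv s ` J"
      then obtain j' where j': "j' \<in> J" "k = inv s j'" by auto
      have "k < d" using j' Jd permutes_in_image[OF permutes_inv[OF s]] by auto
      moreover have "s k = j'" using j' permutes_inverses[OF s] by simp
      ultimately show "k \<in> C" using j' Ys_eq[OF sS] unfolding C_def J_def constcols_def by auto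
    qed
    have injI: "inj_on (inv s) A" for A
      using permutes_inj[OF permutes_inv[OF s]] by (meson inj_on_subset subset_UNIV)
    have c1: "card C = card J" using C_eq card_image[OF injI] by simp
    have "{k \<in> C. q k = b} = inv s ` {j' \<in> J. q (inv s j') = b}" using C_eq by auto
    then have c2: "card {k \<in> C. q k = b} = card {j' \<in> J. q (inv s j') = b}"
      using card_image[OF injI] by simp
    have "0.9 * real (card C) \<le> real (card {k \<in> C. q k = b})"
      using ag b unfolding strongly_agrees_def C_def by blast
    then show "0.9 * real (card J) \<le> real (card {j' \<in> J. q (inv s j') = b})"
      using c1 c2 by simp
  qed
  have "real (card J) * (\<Sum>s\<in>S. F s j) = (\<Sum>j'\<in>J. \<Sum>s\<in>S. F s j')"
  proof -
    have "(\<Sum>j'\<in>J. \<Sum>s\<in>S. F s j') = (\<Sum>j'\<in>J. \<Sum>s\<in>S. F s j)"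
      by (rule sum.cong[OF refl]) (rule swap[symmetric])
    then show ?thesis by simp
  qed
  also have "\<dots> = (\<Sum>s\<in>S. \<Sum>j'\<in>J. F s j')" by (rule sum.swap)
  also have "\<dots> \<ge> (\<Sum>s\<in>S. 0.9 * real (card J))" by (rule sum_mono) (rule per)
  finally have "real (card J) * (0.9 * real (card S)) \<le> real (card J) * (\<Sum>s\<in>S. F s j)"
    by (simp add: algebra_simps)
  moreover have "card J > 0" using Jfin jJ by (auto simp: card_gt_0_iff)
  ultimately have "0.9 * real (card S) \<le> (\<Sum>s\<in>S. F s j)" by simp
  moreover have "card S > 0" using Sfin Sne by (auto simp: card_gt_0_iff)
  ultimately show "0.9 \<le> measure_pmf.prob
           (do { P \<leftarrow> pmf_of_set (perm_mats d);
                 q \<leftarrow> M (PAP n d0 l X P);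
                 return_pmf (\<lambda>j. if j < d0 then vec_mat d d q (transp_mat P) j else 0) }) {q. q j = b}"
    unfolding prob_eq by (simp add: pos_le_divide_eq)
qed
end
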